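(* There exists a constant $M>0$ such that for all $t\ge s\ge0$, \[ |K_1(t,s)|\le M\,E(t,s)\quad\text{and}\quad |K_2(t,s)|\le M\,E(t,s), \] where $K_1(t,s)=\omega^2R(t,s)-\partial_sR(t,s)$ and $K_2(t,s)=\omega^2\partial_tR(t,s)-\partial_t\partial_sR(t,s)$.
   Context: Standing assumptions: $\omega>0$ is a constant; $p\in C^1([0,\infty))$ with $p(t)>0$ and $p'(t)<0$ for all $t\ge0$, $\int_0^\infty p(t)\,dt=\infty$ and $\int_0^\infty p(t)^2\,dt<\infty$. Notation: $E(t,s)=\exp(-\frac12\int_s^tp(\tau)\,d\tau)$ for $0\le s\le t$; $q(t)=-\frac14p(t)^2-\frac12p'(t)$. For each $s\ge0$, $t\mapsto G_u(t,s)$ ($t\ge s$) is the solution of $\partial_t^2G_u+(\omega^2+q(t))G_u=0$ with $G_u(s,s)=0$, $\partial_tG_u(t,s)|_{t=s}=1$; $R(t,s)=E(t,s)G_u(t,s)$. *)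

theory Defs
  imports "HOL-Analysis.Analysis"
begin

definition Eker :: "(real \<Rightarrow> real) \<Rightarrow> real \<Rightarrow> real \<Rightarrow> real" where
  "Eker p t s = exp (- (1/2) * (integral {0..t} p - integral {0..s} p))"

definition qfun :: "(real \<Rightarrow> real) \<Rightarrow> (real \<Rightarrow> real) \<Rightarrow> real \<Rightarrow> real" where
  "qfun p p' t = - (1/4) * (p t)^2 - (1/2) * p' t"

definition Rker :: "(real \<Rightarrow> real) \<Rightarrow> (real \<Rightarrow> real \<Rightarrow> real) \<Rightarrow> real \<Rightarrow> real \<Rightarrow> real" where
  "Rker p G t s = Eker p t s * G t s"

end

theory Submission
  imports Defs
begin


lemma at_Ici_eq:
  fixes x b :: real
  assumes "0 \<le> x" "x < b"
  shows "at x within {0..b} = at x within {0..}"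
  by (rule at_within_nhd[of x "{..<b}"]) (use assms in auto)

lemma int_deriv_Ici:
  fixes f :: "real \<Rightarrow> real"
  assumes "continuous_on {0..} f" "0 \<le> x"
  shows "((\<lambda>t. integral {0..t} f) has_real_derivative f x) (at x within {0..})"
proof -
  have "continuous_on {0..x+1} f" using assms(1) by (rule continuous_on_subset) auto
  from integral_has_real_derivative[OF this, of x] assms(2)
  have "((\<lambda>t. integral {0..t} f) has_real_derivative f x) (at x within {0..x+1})" by auto
  thus ?thesis using at_Ici_eq[of x "x+1"] assms(2) by simp
qed

lemma antitone_Ici:
  fixes f f' :: "real \<Rightarrow> real"
  assumes d: "\<And>x. 0 \<le> x \<Longrightarrow> (f has_real_derivative f' x) (at x within {0..})"
    and n: "\<And>x. 0 \<le> x \<Longrightarrow> f' x \<le> 0"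
    and ab: "0 \<le> a" "a \<le> b"
  shows "f b \<le> f a"
proof (rule DERIV_nonpos_imp_decreasing_open[OF ab(2)])
  fix x assume x: "a < x" "x < b"
  have "at x within {0..} = at x"
    by (rule at_within_open_subset[of x "{0<..}"]) (use x ab in auto)
  then show "\<exists>y. DERIV f x :> y \<and> y \<le> 0" using d[of x] n[of x] x ab by auto
next
  have "continuous_on {0..} f" by (rule DERIV_continuous_on[where D=f']) (use d in auto)
  then show "continuous_on {a..b} f" by (rule continuous_on_subset) (use ab in auto)
qed

definition sol :: "real \<Rightarrow> (real \<Rightarrow> real) \<Rightarrow> (real \<Rightarrow> real) \<Rightarrow> (real \<Rightarrow> real) \<Rightarrow> bool" where
  "sol w Q y y' \<longleftrightarrow> (\<forall>t\<ge>0. (y has_real_derivative y' t) (at t within {0..}) \<and>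
      (y' has_real_derivative (-(w^2 + Q t) * y t)) (at t within {0..}))"

lemma wronskian_const:
  assumes "sol w Q y y'" "sol w Q z z'" "0 \<le> t"
  shows "y t * z' t - y' t * z t = y 0 * z' 0 - y' 0 * z 0"
proof -
  have "\<exists>c. \<forall>x\<in>{0..}. y x * z' x - y' x * z x = c"
  proof (rule has_field_derivative_zero_constant)
    fix x :: real assume "x \<in> {0..}"
    hence x: "0 \<le> x" by auto
    have "((\<lambda>x. y x * z' x - y' x * z x) has_real_derivative
       (y' x * z' x + y x * (-(w^2 + Q x) * z x)) - ((-(w^2 + Q x) * y x) * z x + y' x * z' x)) (at x within {0..})"
    proof -
      have a: "(y has_real_derivative y' x) (at x within {0..})"
        "(y' has_real_derivative (-(w^2 + Q x) * y x)) (at x within {0..})"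
        "(z has_real_derivative z' x) (at x within {0..})"
        "(z' has_real_derivative (-(w^2 + Q x) * z x)) (at x within {0..})"
        using assms(1,2) x unfolding sol_def by auto
      show ?thesis by (rule DERIV_cong[OF DERIV_diff[OF DERIV_mult[OF a(1) a(4)] DERIV_mult[OF a(2) a(3)]]]) (simp add: algebra_simps)
    qed
    then show "((\<lambda>x. y x * z' x - y' x * z x) has_real_derivative 0) (at x within {0..})"
      by (simp add: algebra_simps)
  qed auto
  then obtain c where "\<forall>x\<in>{0..}. y x * z' x - y' x * z x = c" by blast
  then show ?thesis using assms(3) by force
qed

lemma sq_bound_abs:
  fixes x D :: real
  assumes "x^2 \<le> D"
  shows "\<bar>x\<bar> \<le> 1 + D"
proof (cases "\<bar>x\<bar> \<le> 1")
  case True then show ?thesis using assms by (smt (verit) zero_le_power2)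
next
  case False
  then have "1 * \<bar>x\<bar> \<le> \<bar>x\<bar> * \<bar>x\<bar>" by (intro mult_right_mono) auto
  also have "\<dots> = x^2" by (simp add: power2_eq_square abs_mult_self_eq)
  finally show ?thesis using assms by linarith
qed

lemma energy_bound:
  fixes w :: real
  assumes s: "sol w Q y y'" and wpos: "w > 0"
   and hd: "\<And>t. 0\<le>t \<Longrightarrow> (H has_real_derivative h t) (at t within {0..})"
   and qh: "\<And>t. 0\<le>t \<Longrightarrow> \<bar>Q t\<bar> \<le> h t" and H0: "H 0 = 0"
   and Hb: "\<And>t. 0\<le>t \<Longrightarrow> H t \<le> Hb"
  shows "\<exists>B. \<forall>t\<ge>0. \<bar>y t\<bar> \<le> B \<and> \<bar>y' t\<bar> \<le> B"
proof -
  define V where "V t = y' t * y' t + w^2 * (y t * y t)" for t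
  define F where "F t = V t * exp (-(H t)/w)" for t
  define F' where "F' t = ((-(w^2+Q t)*y t) * y' t + y' t * (-(w^2+Q t)*y t) + w^2 * (y' t * y t + y' t * y t)) * exp(-(H t)/w)
        + V t * (exp(-(H t)/w) * (-(h t)/w))" for t
  have Fd: "(F has_real_derivative F' t) (at t within {0..})" if t: "0 \<le> t" for t
  proof -
    have a: "(y has_real_derivative y' t) (at t within {0..})"
        "(y' has_real_derivative (-(w^2 + Q t) * y t)) (at t within {0..})"
      using s t unfolding sol_def by auto
    have V: "(V has_real_derivative ((-(w^2+Q t)*y t) * y' t + y' t * (-(w^2+Q t)*y t) + w^2 * (y' t * y t + y' t * y t))) (at t within {0..})"
      unfolding V_def
      by (rule DERIV_cong[OF DERIV_add[OF DERIV_mult[OF a(2) a(2)] DERIV_cmult[OF DERIV_mult[OF a(1) a(1)]]]]) (simp add: algebra_simps)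
    have E: "((\<lambda>t. exp (-(H t)/w)) has_real_derivative (exp(-(H t)/w) * (-(h t)/w))) (at t within {0..})"
      by (rule DERIV_cong[OF DERIV_chain2[OF DERIV_exp DERIV_cdivide[OF DERIV_minus[OF hd[OF t]]]]]) simp
    show ?thesis unfolding F_def F'_def
      by (rule DERIV_cong[OF DERIV_mult[OF V E]]) (simp add: algebra_simps)
  qed
  have F'n: "F' t \<le> 0" if t: "0 \<le> t" for t
  proof -
    have h0: "0 \<le> h t" using qh[OF t] by linarith
    have amgm: "2 * w * \<bar>y t\<bar> * \<bar>y' t\<bar> \<le> V t"
    proof -
      have "0 \<le> (w * \<bar>y t\<bar> - \<bar>y' t\<bar>)^2" by simp
      then show ?thesis unfolding V_def by (simp add: power2_eq_square algebra_simps abs_mult_self_eq)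
    qed
    have "-(2 * Q t * y t * y' t) * w \<le> \<bar>Q t\<bar> * (2 * w * \<bar>y t\<bar> * \<bar>y' t\<bar>)"
    proof -
      have "-(2 * Q t * y t * y' t) * w \<le> \<bar>2 * Q t * y t * y' t * w\<bar>" by (metis abs_ge_minus_self minus_mult_left)
      also have "\<dots> = \<bar>Q t\<bar> * (2 * w * \<bar>y t\<bar> * \<bar>y' t\<bar>)" using wpos by (simp add: abs_mult)
      finally show ?thesis .
    qed
    also have "\<dots> \<le> h t * V t"
      by (rule mult_mono[OF qh[OF t] amgm h0]) (use wpos in simp)
    finally have key: "-(2 * Q t * y t * y' t) * w \<le> h t * V t" .
    have "F' t = (-(2 * Q t * y t * y' t) - V t * h t / w) * exp(-(H t)/w)"
      unfolding F'_def by (simp add: algebra_simps power2_eq_square)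
    moreover have "-(2 * Q t * y t * y' t) - V t * h t / w \<le> 0"
      using key wpos by (simp add: field_simps)
    ultimately show ?thesis by (simp add: mult_nonpos_nonneg)
  qed
  define C where "C = V 0 * exp (Hb / w)"
  have VC: "V t \<le> C" if t: "0 \<le> t" for t
  proof -
    have "F t \<le> F 0" by (rule antitone_Ici[OF Fd F'n]) (use t in auto)
    hence "F t \<le> V 0" by (simp add: F_def H0)
    have "V t = F t * exp (H t / w)" unfolding F_def by (simp add: exp_minus_inverse mult.assoc flip: exp_add)
    also have "\<dots> \<le> V 0 * exp (H t / w)" using \<open>F t \<le> V 0\<close> by simp
    also have "\<dots> \<le> V 0 * exp (Hb / w)"
    proof (rule mult_left_mono)
      show "exp (H t / w) \<le> exp (Hb / w)" using Hb[OF t] wpos by (simp add: divide_right_mono)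
      show "0 \<le> V 0" unfolding V_def by simp
    qed
    finally show ?thesis unfolding C_def .
  qed
  show ?thesis
  proof (intro exI allI impI conjI)
    fix t :: real assume t: "0 \<le> t"
    have "(y' t)^2 \<le> C" using VC[OF t] unfolding V_def by (simp add: power2_eq_square) (smt (verit) mult_nonneg_nonneg zero_le_power2 zero_le_square)
    then show "\<bar>y' t\<bar> \<le> 1 + C + C / w^2" using sq_bound_abs[of "y' t" C] wpos
      by (smt (verit) VC divide_nonneg_pos t V_def zero_le_power2 zero_le_square mult_nonneg_nonneg zero_less_power)
    have "w^2 * (y t)^2 \<le> C" using VC[OF t] unfolding V_def by (simp add: power2_eq_square) (smt (verit) zero_le_square)
    then have "(y t)^2 \<le> C / w^2" using wpos by (simp add: field_simps)
    then show "\<bar>y t\<bar> \<le> 1 + C + C / w^2" using sq_bound_abs[of "y t" "C / w^2"]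
      by (smt (verit) VC t V_def zero_le_square mult_nonneg_nonneg zero_le_power2)
  qed
qed

lemma mb:
  fixes a b A B :: real
  assumes "\<bar>a\<bar> \<le> A" "\<bar>b\<bar> \<le> B"
  shows "\<bar>a * b\<bar> \<le> A * B"
  unfolding abs_mult by (rule mult_mono) (use assms in auto)

lemma bnd4:
  fixes a b x d c B :: real
  assumes "\<bar>a\<bar> \<le> B" "\<bar>b\<bar> \<le> B" "\<bar>x\<bar> \<le> B" "\<bar>d\<bar> \<le> B"
  shows "\<bar>(a * b - x * d) / c\<bar> \<le> 2 * B * B / \<bar>c\<bar>"
proof -
  have "\<bar>a * b - x * d\<bar> \<le> B * B + B * B"
    using mb[OF assms(1,2)] mb[OF assms(3,4)] by linarith
  then show ?thesis by (simp add: abs_divide divide_right_mono)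
qed

lemma absE:
  fixes E X M :: real
  assumes "0 \<le> E" "\<bar>X\<bar> \<le> M"
  shows "\<bar>E * X\<bar> \<le> M * E"
  using mb[of E E X M] assms by (simp add: mult.commute)



theorem mainTheorem6:
  fixes \<omega> :: real and p p' :: "real \<Rightarrow> real"
    and G G1 :: "real \<Rightarrow> real \<Rightarrow> real"
  assumes omega_pos: "\<omega> > 0"
    and p_deriv: "\<And>t. t \<ge> 0 \<Longrightarrow> (p has_real_derivative p' t) (at t within {0..})"
    and p'_cont: "continuous_on {0..} p'"
    and p_pos: "\<And>t. t \<ge> 0 \<Longrightarrow> p t > 0"
    and p'_neg: "\<And>t. t \<ge> 0 \<Longrightarrow> p' t < 0"
    and p_int_infinite: "filterlim (\<lambda>t. integral {0..t} p) at_top at_top"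
    and p_sq_int: "(\<lambda>t. (p t)^2) integrable_on {0..}"
    and G_deriv: "\<And>t s. 0 \<le> s \<Longrightarrow> 0 \<le> t \<Longrightarrow>
        ((\<lambda>\<tau>. G \<tau> s) has_real_derivative G1 t s) (at t within {0..})"
    and G1_deriv: "\<And>t s. 0 \<le> s \<Longrightarrow> 0 \<le> t \<Longrightarrow>
        ((\<lambda>\<tau>. G1 \<tau> s) has_real_derivative (- (\<omega>^2 + qfun p p' t) * G t s)) (at t within {0..})"
    and G_init: "\<And>s. 0 \<le> s \<Longrightarrow> G s s = 0"
    and G1_init: "\<And>s. 0 \<le> s \<Longrightarrow> G1 s s = 1"
  shows "\<exists>Rs Rt Rts :: real \<Rightarrow> real \<Rightarrow> real. \<exists>M > 0.
     (\<forall>t s. 0 \<le> s \<and> 0 \<le> t \<longrightarrow>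
        ((\<lambda>\<sigma>. Rker p G t \<sigma>) has_real_derivative Rs t s) (at s within {0..}) \<and>
        ((\<lambda>\<tau>. Rker p G \<tau> s) has_real_derivative Rt t s) (at t within {0..}) \<and>
        ((\<lambda>\<tau>. Rs \<tau> s) has_real_derivative Rts t s) (at t within {0..})) \<and>
     (\<forall>t s. 0 \<le> s \<and> s \<le> t \<longrightarrow>
        \<bar>\<omega>^2 * Rker p G t s - Rs t s\<bar> \<le> M * Eker p t s \<and>
        \<bar>\<omega>^2 * Rt t s - Rts t s\<bar> \<le> M * Eker p t s)"
proof -
  define Q where "Q = qfun p p'"
  have pcont: "continuous_on {0..} p"
    by (rule DERIV_continuous_on[where D=p']) (use p_deriv in auto)
  define P0 where "P0 = p 0"
  have ple: "p t \<le> P0" if "0 \<le> t" for t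
    unfolding P0_def by (rule antitone_Ici[OF p_deriv, of 0 t]) (use p'_neg that in \<open>auto simp: less_imp_le\<close>)
  have P0pos: "0 < P0" using p_pos[of 0] by (simp add: P0_def)
  have solG: "sol \<omega> Q (\<lambda>\<tau>. G \<tau> s) (\<lambda>\<tau>. G1 \<tau> s)" if "0 \<le> s" for s
    unfolding sol_def Q_def using G_deriv G1_deriv that by auto
  define h where "h t = (p t)^2 / 4 - p' t / 2" for t
  define H where "H t = integral {0..t} (\<lambda>t. (p t)^2) / 4 + (P0 - p t) / 2" for t
  define I where "I = integral {0..} (\<lambda>t. (p t)^2)"
  have p2cont: "continuous_on {0..} (\<lambda>t. (p t)^2)" by (intro continuous_intros pcont)
  have Hd: "(H has_real_derivative h t) (at t within {0..})" if t: "0 \<le> t" for t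
    unfolding H_def h_def
    by (rule DERIV_cong[OF DERIV_add[OF DERIV_cdivide[OF int_deriv_Ici[OF p2cont t]]
          DERIV_cdivide[OF DERIV_diff[OF DERIV_const p_deriv[OF t]]]]]) simp
  have Qh: "\<bar>Q t\<bar> \<le> h t" if t: "0 \<le> t" for t
    using p'_neg[OF t] zero_le_power2[of "p t"] unfolding Q_def qfun_def h_def
    by (simp add: abs_le_iff)
  have H0: "H 0 = 0" unfolding H_def P0_def by simp
  have Hb: "H t \<le> I / 4 + P0 / 2" if t: "0 \<le> t" for t
  proof -
    have "integral {0..t} (\<lambda>t. (p t)^2) \<le> I" unfolding I_def
    proof (rule integral_subset_le)
      show "(\<lambda>t. (p t)^2) integrable_on {0..t}"
        by (rule integrable_continuous_real, rule continuous_on_subset[OF p2cont]) auto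
    qed (use p_sq_int in auto)
    then show ?thesis unfolding H_def using p_pos[OF t] by (smt (verit) divide_right_mono)
  qed
  have bnd: "\<exists>B. \<forall>t\<ge>0. \<bar>G t s\<bar> \<le> B \<and> \<bar>G1 t s\<bar> \<le> B" if "0 \<le> s" for s
    by (rule energy_bound[OF solG[OF that] omega_pos Hd Qh H0 Hb])
  \<comment> \<open>a second independent solution\<close>
  have "\<exists>s0\<ge>0. G s0 0 \<noteq> 0"
  proof (rule ccontr)
    assume "\<not> ?thesis"
    hence z: "\<And>s. 0 \<le> s \<Longrightarrow> G s 0 = 0" by auto
    have "\<exists>c. \<forall>x\<in>{0..}. G1 x 0 = (c::real)"
    proof (rule has_field_derivative_zero_constant)
      fix x :: real assume "x \<in> {0..}"
      then show "((\<lambda>\<tau>. G1 \<tau> 0) has_real_derivative 0) (at x within {0..})"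
        using G1_deriv[of 0 x] z[of x] by simp
    qed auto
    then obtain c where c: "\<And>x. 0 \<le> x \<Longrightarrow> G1 x 0 = c" by auto
    have "c = 1" using c[of 0] G1_init[of 0] by simp
    have "((\<lambda>\<tau>. G \<tau> 0) has_real_derivative 1) (at 1 within {0..})"
      using G_deriv[of 0 1] c[of 1] \<open>c = 1\<close> by simp
    hence "((\<lambda>_. 0) has_real_derivative 1) (at 1 within {0..})"
      by (rule has_field_derivative_transform_within[where d=1]) (auto simp: z)
    moreover have "at (1::real) within {0..} = at 1"
      by (rule at_within_open_subset[of 1 "{0<..}"]) auto
    ultimately have "((\<lambda>_. 0) has_real_derivative 1) (at (1::real))" by simp
    then show False using DERIV_unique[OF _ DERIV_const] by fastforce
  qed
  then obtain s0 where s0: "0 \<le> s0" "G s0 0 \<noteq> 0" by auto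
  define u where "u t = G t 0" for t
  define u' where "u' t = G1 t 0" for t
  define w where "w t = G t s0" for t
  define w' where "w' t = G1 t s0" for t
  define c where "c = u s0"
  have cnz: "c \<noteq> 0" using s0 by (simp add: c_def u_def)
  have solu: "sol \<omega> Q u u'" unfolding u_def u'_def using solG[of 0] by simp
  have solw: "sol \<omega> Q w w'" unfolding w_def w'_def using solG[OF s0(1)] by simp
  have Wc: "u t * w' t - u' t * w t = c" if "0 \<le> t" for t
    using wronskian_const[OF solu solw that] wronskian_const[OF solu solw s0(1)]
    by (simp add: c_def w_def w'_def G_init G1_init s0(1))
  have Grep: "G t s = (u s * w t - w s * u t) / c \<and> G1 t s = (u s * w' t - w s * u' t) / c"
    if s: "0 \<le> s" and t: "0 \<le> t" for s t
  proof -
    have A: "G t s * u' t - G1 t s * u t = - u s"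
      using wronskian_const[OF solG[OF s] solu t] wronskian_const[OF solG[OF s] solu s]
      by (simp add: G_init G1_init s)
    have B: "G t s * w' t - G1 t s * w t = - w s"
      using wronskian_const[OF solG[OF s] solw t] wronskian_const[OF solG[OF s] solw s]
      by (simp add: G_init G1_init s)
    have C: "u t * w' t - u' t * w t = c" by (rule Wc[OF t])
    have "G t s * c = u s * w t - w s * u t"
      using A B C by algebra
    moreover have "G1 t s * c = u s * w' t - w s * u' t"
      using A B C by algebra
    ultimately show ?thesis using cnz by (simp add: field_simps)
  qed
  obtain Bu where Bu: "\<And>t. 0 \<le> t \<Longrightarrow> \<bar>u t\<bar> \<le> Bu \<and> \<bar>u' t\<bar> \<le> Bu"
    using bnd[of 0] unfolding u_def u'_def by auto
  obtain Bw where Bw: "\<And>t. 0 \<le> t \<Longrightarrow> \<bar>w t\<bar> \<le> Bw \<and> \<bar>w' t\<bar> \<le> Bw"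
    using bnd[OF s0(1)] unfolding w_def w'_def by auto
  define B where "B = max Bu Bw"
  have uB: "\<bar>u t\<bar> \<le> B" "\<bar>u' t\<bar> \<le> B" "\<bar>w t\<bar> \<le> B" "\<bar>w' t\<bar> \<le> B" if "0 \<le> t" for t
    using Bu[OF that] Bw[OF that] unfolding B_def by auto
  define K where "K = 2 * B * B / \<bar>c\<bar>"
  have K0: "0 \<le> K" unfolding K_def by simp
  define Gs where "Gs t s = (u' s * w t - w' s * u t) / c" for t s
  define Gst where "Gst t s = (u' s * w' t - w' s * u' t) / c" for t s
  have GK: "\<bar>G t s\<bar> \<le> K" "\<bar>G1 t s\<bar> \<le> K" "\<bar>Gs t s\<bar> \<le> K" "\<bar>Gst t s\<bar> \<le> K"
    if s: "0 \<le> s" and t: "0 \<le> t" for s t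
    unfolding K_def Gs_def Gst_def Grep[OF s t, THEN conjunct1] Grep[OF s t, THEN conjunct2]
    by (rule bnd4[OF uB(1)[OF s] uB(3)[OF t] uB(3)[OF s] uB(1)[OF t]],
        rule bnd4[OF uB(1)[OF s] uB(4)[OF t] uB(3)[OF s] uB(2)[OF t]],
        rule bnd4[OF uB(2)[OF s] uB(3)[OF t] uB(4)[OF s] uB(1)[OF t]],
        rule bnd4[OF uB(2)[OF s] uB(4)[OF t] uB(4)[OF s] uB(2)[OF t]])
  define PP where "PP t = integral {0..t} p" for t
  have PPd: "(PP has_real_derivative p t) (at t within {0..})" if "0 \<le> t" for t
    unfolding PP_def by (rule int_deriv_Ici[OF pcont that])
  have Eeq: "Eker p t s = exp (- (1/2) * (PP t - PP s))" for t s
    unfolding Eker_def PP_def by simp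
  have E0: "0 \<le> Eker p t s" for t s unfolding Eker_def by simp
  have Eds: "((\<lambda>\<sigma>. Eker p t \<sigma>) has_real_derivative Eker p t s * (p s / 2)) (at s within {0..})"
    if "0 \<le> s" for t s
    unfolding Eeq
    by (rule DERIV_cong[OF DERIV_chain2[OF DERIV_exp DERIV_cmult[OF DERIV_diff[OF DERIV_const PPd[OF that]]]]]) simp
  have Edt: "((\<lambda>\<tau>. Eker p \<tau> s) has_real_derivative Eker p t s * (- p t / 2)) (at t within {0..})"
    if "0 \<le> t" for t s
    unfolding Eeq
    by (rule DERIV_cong[OF DERIV_chain2[OF DERIV_exp DERIV_cmult[OF DERIV_diff[OF PPd[OF that] DERIV_const]]]]) simp
  have ud: "(u has_real_derivative u' t) (at t within {0..})" "(w has_real_derivative w' t) (at t within {0..})"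
     "(u' has_real_derivative (-(\<omega>^2 + Q t) * u t)) (at t within {0..})"
     "(w' has_real_derivative (-(\<omega>^2 + Q t) * w t)) (at t within {0..})"
    if "0 \<le> t" for t
    using solu solw that unfolding sol_def by auto
  define Rs where "Rs t s = Eker p t s * (p s / 2) * G t s + Eker p t s * Gs t s" for t s
  define Rt where "Rt t s = Eker p t s * (- p t / 2) * G t s + Eker p t s * G1 t s" for t s
  define Rts where "Rts t s = Eker p t s * (- p t / 2) * (p s / 2) * G t s + Eker p t s * (p s / 2) * G1 t s
     + (Eker p t s * (- p t / 2) * Gs t s + Eker p t s * Gst t s)" for t s
  have D1: "((\<lambda>\<sigma>. Rker p G t \<sigma>) has_real_derivative Rs t s) (at s within {0..})"
    if s: "0 \<le> s" and t: "0 \<le> t" for t s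
  proof -
    have gd: "((\<lambda>\<sigma>. (u \<sigma> * w t - w \<sigma> * u t) / c) has_real_derivative Gs t s) (at s within {0..})"
      unfolding Gs_def
      by (rule DERIV_cong[OF DERIV_cdivide[OF DERIV_diff[OF DERIV_mult[OF ud(1)[OF s] DERIV_const] DERIV_mult[OF ud(2)[OF s] DERIV_const]]]]) simp
    have "((\<lambda>\<sigma>. Eker p t \<sigma> * ((u \<sigma> * w t - w \<sigma> * u t) / c)) has_real_derivative Rs t s) (at s within {0..})"
      unfolding Rs_def
      by (rule DERIV_cong[OF DERIV_mult[OF Eds[OF s] gd]]) (simp add: Grep[OF s t] algebra_simps)
    then show ?thesis
      by (rule has_field_derivative_transform_within[where d=1]) (use s t Grep in \<open>auto simp: Rker_def\<close>)
  qed
  have D2: "((\<lambda>\<tau>. Rker p G \<tau> s) has_real_derivative Rt t s) (at t within {0..})"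
    if s: "0 \<le> s" and t: "0 \<le> t" for t s
    unfolding Rker_def Rt_def
    by (rule DERIV_cong[OF DERIV_mult[OF Edt[OF t] G_deriv[OF s t]]]) (simp add: algebra_simps)
  have D3: "((\<lambda>\<tau>. Rs \<tau> s) has_real_derivative Rts t s) (at t within {0..})"
    if s: "0 \<le> s" and t: "0 \<le> t" for t s
  proof -
    have gd: "((\<lambda>\<tau>. Gs \<tau> s) has_real_derivative Gst t s) (at t within {0..})"
      unfolding Gs_def Gst_def
      by (rule DERIV_cong[OF DERIV_cdivide[OF DERIV_diff[OF DERIV_cmult[OF ud(2)[OF t]] DERIV_cmult[OF ud(1)[OF t]]]]]) simp
    show ?thesis unfolding Rs_def Rts_def
      by (rule DERIV_cong[OF DERIV_add[OF DERIV_mult[OF DERIV_mult[OF Edt[OF t] DERIV_const] G_deriv[OF s t]] DERIV_mult[OF Edt[OF t] gd]]])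
        (simp add: algebra_simps)
  qed
  define M where "M = (\<omega>^2 + P0 + 1) * K + \<omega>^2 * (P0 * K + K) + P0 * P0 * K + 2 * P0 * K + K + 1"
  have Mpos: "M > 0" unfolding M_def using K0 P0pos by (simp add: add_nonneg_pos)
  have B1: "\<bar>\<omega>^2 * Rker p G t s - Rs t s\<bar> \<le> M * Eker p t s"
    and B2: "\<bar>\<omega>^2 * Rt t s - Rts t s\<bar> \<le> M * Eker p t s"
    if s: "0 \<le> s" and st: "s \<le> t" for t s
  proof -
    have t: "0 \<le> t" using s st by linarith
    have ab: "\<bar>- p t / 2\<bar> \<le> P0" "\<bar>p s / 2\<bar> \<le> P0"
      using ple[OF t] ple[OF s] p_pos[OF t] p_pos[OF s] by auto
    note g = GK[OF s t]
    have w2: "\<bar>\<omega>^2\<bar> \<le> \<omega>^2" by simp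
    have nn: "0 \<le> \<omega>^2 * K" "0 \<le> P0 * K" "0 \<le> P0 * P0 * K" "0 \<le> \<omega>^2 * (P0 * K + K)" "0 \<le> K"
      using K0 P0pos by auto
    have X1: "\<bar>\<omega>^2 * G t s - p s / 2 * G t s - Gs t s\<bar> \<le> M"
    proof -
      have "\<bar>\<omega>^2 * G t s - p s / 2 * G t s - Gs t s\<bar> \<le> \<bar>\<omega>^2 * G t s\<bar> + \<bar>p s / 2 * G t s\<bar> + \<bar>Gs t s\<bar>"
        by linarith
      moreover have "(\<omega>^2 + P0 + 1) * K = \<omega>^2 * K + P0 * K + K" by (simp add: algebra_simps)
      ultimately show ?thesis
        using mb[OF w2 g(1)] mb[OF ab(2) g(1)] g(3) nn unfolding M_def by linarith
    qed
    have "\<omega>^2 * Rker p G t s - Rs t s = Eker p t s * (\<omega>^2 * G t s - p s / 2 * G t s - Gs t s)"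
      unfolding Rker_def Rs_def by (simp add: algebra_simps)
    then show "\<bar>\<omega>^2 * Rker p G t s - Rs t s\<bar> \<le> M * Eker p t s"
      using absE[OF E0 X1] by simp
    have i1: "\<bar>- p t / 2 * G t s + G1 t s\<bar> \<le> P0 * K + K"
      using mb[OF ab(1) g(1)] g(2) by linarith
    have i2: "\<bar>- p t / 2 * (p s / 2) * G t s\<bar> \<le> P0 * P0 * K"
      using mb[OF mb[OF ab(1) ab(2)] g(1)] .
    have X2: "\<bar>\<omega>^2 * (- p t / 2 * G t s + G1 t s) - (- p t / 2 * (p s / 2) * G t s + p s / 2 * G1 t s
        + (- p t / 2 * Gs t s + Gst t s))\<bar> \<le> M"
    proof -
      have "\<bar>\<omega>^2 * (- p t / 2 * G t s + G1 t s) - (- p t / 2 * (p s / 2) * G t s + p s / 2 * G1 t s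
        + (- p t / 2 * Gs t s + Gst t s))\<bar> \<le> \<bar>\<omega>^2 * (- p t / 2 * G t s + G1 t s)\<bar> + \<bar>- p t / 2 * (p s / 2) * G t s\<bar>
          + \<bar>p s / 2 * G1 t s\<bar> + \<bar>- p t / 2 * Gs t s\<bar> + \<bar>Gst t s\<bar>"
        by linarith
      moreover have "(\<omega>^2 + P0 + 1) * K = \<omega>^2 * K + P0 * K + K" by (simp add: algebra_simps)
      ultimately show ?thesis
        using mb[OF w2 i1] i2 mb[OF ab(2) g(2)] mb[OF ab(1) g(3)] g(4) nn unfolding M_def by linarith
    qed
    have "\<omega>^2 * Rt t s - Rts t s = Eker p t s * (\<omega>^2 * (- p t / 2 * G t s + G1 t s) - (- p t / 2 * (p s / 2) * G t s + p s / 2 * G1 t s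
        + (- p t / 2 * Gs t s + Gst t s)))"
      unfolding Rt_def Rts_def by (simp add: algebra_simps)
    then show "\<bar>\<omega>^2 * Rt t s - Rts t s\<bar> \<le> M * Eker p t s"
      using absE[OF E0 X2] by simp
  qed
  show ?thesis
    apply (rule exI[of _ Rs], rule exI[of _ Rt], rule exI[of _ Rts], rule exI[of _ M])
    using Mpos D1 D2 D3 B1 B2 by simp
qed

end
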